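(* Consider problem (PI): minimize $f(x)$ subject to $x\in X$, $g_i(x)\le 0$, $i=1,\dots,m$, where $\Gamma\subseteq\mathbb R^n$ is an open convex set, $X\subseteq\Gamma$ is convex (not necessarily open), and $f,g_1,\dots,g_m:\Gamma\to\mathbb R$ are differentiable and quasiconvex on $\Gamma$. Let $\bar S$ be the solution set of (PI) and $\bar x\in\bar S$. Suppose GMFCQ holds at $\bar x$ and $\lambda=(\lambda_1,\dots,\lambda_m)$ is a KKT multiplier at $\bar x$. Then $\bar S\subseteq X_1(\lambda)$, and the Lagrangian $L(\cdot)=f(\cdot)+\sum_{i\in I(\bar x)}\lambda_i g_i(\cdot)$ is constant on $\bar S$.
   Context: Quasiconvexity on $\Gamma$: $f(x+t(y-x))\le\max\{f(x),f(y)\}$ for all $x,y\in\Gamma$, $t\in[0,1]$. Feasible set $S:=\{x\in X\mid g_i(x)\le0,\ i=1,\dots,m\}$; $\bar S$ the set of global minimizers of $f$ on $S$. Active index set $I(x):=\{i\mid g_i(x)=0\}$. For a cone $C$, its negative polar is $C^*:=\{x\in\mathbb R^n\mid c^Tx\le 0\ \forall c\in C\}$; $T_X(x)$ is the tangent cone of $X$ at $x$ and $N_X(x):=(T_X(x))^*$ is the normal cone. GMFCQ holds at $\bar x$ iff there is $y\in (N_X(\bar x))^*$ with $\nabla g_i(\bar x)^Ty<0$ for all $i\in I(\bar x)$. A KKT multiplier at $\bar x$ is $\lambda\in\mathbb R^m$ with $\lambda_i\ge0$ for all $i$, $\lambda_ig_i(\bar x)=0$ for all $i$, and $\big[\nabla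 f(\bar x)+\sum_{i\in I(\bar x)}\lambda_i\nabla g_i(\bar x)\big]^T(x-\bar x)\ge0$ for all $x\in X$. Define $\tilde I(\bar x,\lambda):=\{i\mid g_i(\bar x)=0,\ \lambda_i>0\}$ and $X_1(\lambda):=\{x\in X\mid g_i(x)=0\ \forall i\in\tilde I(\bar x,\lambda),\ g_i(x)\le0\ \forall i\notin\tilde I(\bar x,\lambda)\}$. *)

theory Defs
  imports "HOL-Analysis.Analysis"
begin

definition quasiconvex_on :: "'a::real_vector set \<Rightarrow> ('a \<Rightarrow> real) \<Rightarrow> bool" where
  "quasiconvex_on \<Gamma> f \<longleftrightarrow>
     (\<forall>x\<in>\<Gamma>. \<forall>y\<in>\<Gamma>. \<forall>t::real. 0 \<le> t \<and> t \<le> 1 \<longrightarrow> f (x + t *\<^sub>R (y - x)) \<le> max (f x) (f y))"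

definition polar_cone :: "'a::real_inner set \<Rightarrow> 'a set" where
  "polar_cone C = {x. \<forall>c\<in>C. c \<bullet> x \<le> 0}"

definition tangent_cone :: "'a::real_normed_vector set \<Rightarrow> 'a \<Rightarrow> 'a set" where
  "tangent_cone X x = {d. \<exists>t u. (\<forall>k. t k > (0::real)) \<and> t \<longlonglongrightarrow> 0 \<and> u \<longlonglongrightarrow> d \<and>
                             (\<forall>k. x + t k *\<^sub>R u k \<in> X)}"

definition normal_cone :: "'a::real_inner set \<Rightarrow> 'a \<Rightarrow> 'a set" where
  "normal_cone X x = polar_cone (tangent_cone X x)"

definition feasible_set :: "'a set \<Rightarrow> nat \<Rightarrow> (nat \<Rightarrow> 'a \<Rightarrow> real) \<Rightarrow> 'a set" where
  "feasible_set X m g = {x\<in>X. \<forall>i\<in>{1..m}. g i x \<le> 0}"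

definition solution_set :: "('a \<Rightarrow> real) \<Rightarrow> 'a set \<Rightarrow> nat \<Rightarrow> (nat \<Rightarrow> 'a \<Rightarrow> real) \<Rightarrow> 'a set" where
  "solution_set f X m g = {x\<in>feasible_set X m g. \<forall>y\<in>feasible_set X m g. f x \<le> f y}"

definition active_set :: "nat \<Rightarrow> (nat \<Rightarrow> 'a \<Rightarrow> real) \<Rightarrow> 'a \<Rightarrow> nat set" where
  "active_set m g x = {i\<in>{1..m}. g i x = 0}"

text \<open>GMFCQ at xb, with dg i the gradient of g i.\<close>
definition GMFCQ :: "'a::real_inner set \<Rightarrow> nat \<Rightarrow> (nat \<Rightarrow> 'a \<Rightarrow> real) \<Rightarrow> (nat \<Rightarrow> 'a \<Rightarrow> 'a) \<Rightarrow> 'a \<Rightarrow> bool" where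
  "GMFCQ X m g dg xb \<longleftrightarrow>
     (\<exists>y\<in>polar_cone (normal_cone X xb). \<forall>i\<in>active_set m g xb. dg i xb \<bullet> y < 0)"

text \<open>KKT multiplier at xb; df, dg are the gradients of f, g i.\<close>
definition KKT_multiplier ::
  "'a::real_inner set \<Rightarrow> nat \<Rightarrow> ('a \<Rightarrow> 'a) \<Rightarrow> (nat \<Rightarrow> 'a \<Rightarrow> real) \<Rightarrow> (nat \<Rightarrow> 'a \<Rightarrow> 'a) \<Rightarrow> 'a \<Rightarrow> (nat \<Rightarrow> real) \<Rightarrow> bool" where
  "KKT_multiplier X m df g dg xb lam \<longleftrightarrow>
     (\<forall>i\<in>{1..m}. lam i \<ge> 0) \<and> (\<forall>i\<in>{1..m}. lam i * g i xb = 0) \<and>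
     (\<forall>x\<in>X. (df xb + (\<Sum>i\<in>active_set m g xb. lam i *\<^sub>R dg i xb)) \<bullet> (x - xb) \<ge> 0)"

definition Itilde :: "nat \<Rightarrow> (nat \<Rightarrow> 'a \<Rightarrow> real) \<Rightarrow> 'a \<Rightarrow> (nat \<Rightarrow> real) \<Rightarrow> nat set" where
  "Itilde m g xb lam = {i\<in>{1..m}. g i xb = 0 \<and> lam i > 0}"

definition X1 :: "'a set \<Rightarrow> nat \<Rightarrow> (nat \<Rightarrow> 'a \<Rightarrow> real) \<Rightarrow> 'a \<Rightarrow> (nat \<Rightarrow> real) \<Rightarrow> 'a set" where
  "X1 X m g xb lam = {x\<in>X. (\<forall>i\<in>Itilde m g xb lam. g i x = 0) \<and>
                           (\<forall>i\<in>{1..m} - Itilde m g xb lam. g i x \<le> 0)}"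

end

theory Submission
  imports Defs
begin

lemma qc_grad:
  fixes g :: "'a::euclidean_space \<Rightarrow> real"
  assumes qc: "quasiconvex_on \<Gamma> g" and der: "GDERIV g z :> D"
    and y: "y \<in> \<Gamma>" and z: "z \<in> \<Gamma>" and le: "g y \<le> g z"
  shows "D \<bullet> (y - z) \<le> 0"
proof (rule ccontr)
  assume "\<not> D \<bullet> (y - z) \<le> 0"
  hence l: "0 < D \<bullet> (y - z)" by simp
  have d1: "((\<lambda>t::real. z + t *\<^sub>R (y - z)) has_derivative (\<lambda>t. t *\<^sub>R (y - z))) (at 0)"
    by (auto intro!: derivative_eq_intros)
  have d2: "(g has_derivative (\<lambda>h. h \<bullet> D)) (at ((\<lambda>t::real. z + t *\<^sub>R (y - z)) 0))"
    using der by (simp add: gderiv_def)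
  have "((g \<circ> (\<lambda>t::real. z + t *\<^sub>R (y - z))) has_derivative ((\<lambda>h. h \<bullet> D) \<circ> (\<lambda>t. t *\<^sub>R (y - z)))) (at 0)"
    by (rule diff_chain_at[OF d1 d2])
  moreover have "((\<lambda>h. h \<bullet> D) \<circ> (\<lambda>t. t *\<^sub>R (y - z))) = (*) (D \<bullet> (y - z))"
    by (auto simp: inner_commute)
  ultimately have "DERIV (\<lambda>t. g (z + t *\<^sub>R (y - z))) 0 :> D \<bullet> (y - z)"
    by (simp add: has_field_derivative_def o_def)
  from DERIV_pos_inc_right[OF this l] obtain d where d: "d > 0"
    and inc: "\<And>h. h > 0 \<Longrightarrow> h < d \<Longrightarrow> g (z + 0 *\<^sub>R (y - z)) < g (z + (0 + h) *\<^sub>R (y - z))"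
    by blast
  define h where "h = min (d/2) 1"
  have h: "h > 0" "h < d" "h \<le> 1" using d by (auto simp: h_def)
  have "g z < g (z + h *\<^sub>R (y - z))" using inc[OF h(1,2)] by simp
  moreover have "g (z + h *\<^sub>R (y - z)) \<le> max (g z) (g y)"
    using qc y z h unfolding quasiconvex_on_def by auto
  ultimately show False using le by simp
qed

theorem lemma7:
  fixes \<Gamma> X :: "'a::euclidean_space set"
    and f :: "'a \<Rightarrow> real" and df :: "'a \<Rightarrow> 'a"
    and m :: nat and g :: "nat \<Rightarrow> 'a \<Rightarrow> real" and dg :: "nat \<Rightarrow> 'a \<Rightarrow> 'a"
    and xb :: 'a and lam :: "nat \<Rightarrow> real"
  assumes "open \<Gamma>" and "convex \<Gamma>" and "X \<subseteq> \<Gamma>" and "convex X"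
    and "\<And>x. x \<in> \<Gamma> \<Longrightarrow> GDERIV f x :> df x"
    and "\<And>i x. i \<in> {1..m} \<Longrightarrow> x \<in> \<Gamma> \<Longrightarrow> GDERIV (g i) x :> dg i x"
    and "quasiconvex_on \<Gamma> f"
    and "\<And>i. i \<in> {1..m} \<Longrightarrow> quasiconvex_on \<Gamma> (g i)"
    and "xb \<in> solution_set f X m g"
    and "GMFCQ X m g dg xb"
    and "KKT_multiplier X m df g dg xb lam"
  shows "solution_set f X m g \<subseteq> X1 X m g xb lam \<and>
         (\<exists>c. \<forall>x\<in>solution_set f X m g. f x + (\<Sum>i\<in>active_set m g xb. lam i * g i x) = c)"
proof -
  note A = assms
  let ?S = "solution_set f X m g"
  let ?A = "active_set m g xb"
  have finA: "finite ?A" unfolding active_set_def by auto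
  have Asub: "?A \<subseteq> {1..m}" unfolding active_set_def by auto
  have xbX: "xb \<in> X" and xbF: "\<forall>i\<in>{1..m}. g i xb \<le> 0" and xbmin: "\<forall>y\<in>feasible_set X m g. f xb \<le> f y"
    using A(9) unfolding solution_set_def feasible_set_def by auto
  have lam0: "\<forall>i\<in>{1..m}. lam i \<ge> 0"
    and kkt: "\<forall>x\<in>X. (df xb + (\<Sum>i\<in>?A. lam i *\<^sub>R dg i xb)) \<bullet> (x - xb) \<ge> 0"
    using A(11) unfolding KKT_multiplier_def by auto
  have key: "g k x = 0" if xS: "x \<in> ?S" and k: "k \<in> Itilde m g xb lam" for x k
  proof (rule ccontr)
    assume ne: "g k x \<noteq> 0"
    have xX: "x \<in> X" and xF: "\<forall>i\<in>{1..m}. g i x \<le> 0" and xmin: "\<forall>y\<in>feasible_set X m g. f x \<le> f y"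
      using xS unfolding solution_set_def feasible_set_def by auto
    have kA: "k \<in> ?A" and lk: "lam k > 0" and km: "k \<in> {1..m}"
      using k unfolding Itilde_def active_set_def by auto
    have gkx: "g k x < 0" using ne xF km by force
    have xG: "x \<in> \<Gamma>" and xbG: "xb \<in> \<Gamma>" using xX xbX A(3) by auto
    have "f x \<le> f xb" using xmin A(9) unfolding solution_set_def by auto
    hence fneg: "df xb \<bullet> (x - xb) \<le> 0"
      using qc_grad[OF A(7) A(5)[OF xbG] xG xbG] by simp
    have gneg: "dg i xb \<bullet> (x - xb) \<le> 0" if "i \<in> ?A" for i
    proof -
      have i: "i \<in> {1..m}" "g i xb = 0" using that unfolding active_set_def by auto
      show ?thesis using qc_grad[OF A(8)[OF i(1)] A(6)[OF i(1) xbG] xG xbG] xF i by auto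
    qed
    have "0 \<le> (df xb + (\<Sum>i\<in>?A. lam i *\<^sub>R dg i xb)) \<bullet> (x - xb)" using kkt xX by auto
    also have "\<dots> = df xb \<bullet> (x - xb) + (\<Sum>i\<in>?A. lam i * (dg i xb \<bullet> (x - xb)))"
      by (simp add: inner_add_left inner_sum_left)
    also have "(\<Sum>i\<in>?A. lam i * (dg i xb \<bullet> (x - xb))) = lam k * (dg k xb \<bullet> (x - xb)) + (\<Sum>i\<in>?A - {k}. lam i * (dg i xb \<bullet> (x - xb)))"
      using finA kA by (simp add: sum.remove)
    also have "(\<Sum>i\<in>?A - {k}. lam i * (dg i xb \<bullet> (x - xb))) \<le> 0"
    proof (rule sum_nonpos)
      fix i assume "i \<in> ?A - {k}"
      hence "lam i \<ge> 0" "dg i xb \<bullet> (x - xb) \<le> 0" using lam0 Asub gneg by auto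
      thus "lam i * (dg i xb \<bullet> (x - xb)) \<le> 0" by (simp add: mult_nonneg_nonpos)
    qed
    finally have "0 \<le> df xb \<bullet> (x - xb) + (lam k * (dg k xb \<bullet> (x - xb)) + 0)" by simp
    hence "0 \<le> lam k * (dg k xb \<bullet> (x - xb))" using fneg by linarith
    hence pos: "0 \<le> dg k xb \<bullet> (x - xb)" using lk by (simp add: zero_le_mult_iff)
    let ?d = "dg k xb"
    have dz: "?d = 0"
    proof (rule ccontr)
      assume dn: "?d \<noteq> 0"
      have "isCont (g k) x"
        using A(6)[OF km xG] by (simp add: gderiv_def has_derivative_continuous)
      hence "eventually (\<lambda>y. g k y < 0) (at x)"
        using gkx by (simp add: isCont_def order_tendstoD(2))
      moreover have "eventually (\<lambda>y. y \<in> \<Gamma>) (at x)"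
        using A(1) xG eventually_at_topological by blast
      ultimately have "eventually (\<lambda>y. g k y < 0 \<and> y \<in> \<Gamma>) (at x)" by (rule eventually_conj)
      then obtain e where e: "e > 0" and eb: "\<And>y. y \<noteq> x \<Longrightarrow> dist y x < e \<Longrightarrow> g k y < 0 \<and> y \<in> \<Gamma>"
        unfolding eventually_at by blast
      define t where "t = e / (2 * norm ?d)"
      have t: "t > 0" using e dn by (simp add: t_def)
      define y where "y = x + t *\<^sub>R ?d"
      have "dist y x = t * norm ?d" using t by (simp add: y_def dist_norm)
      also have "\<dots> = e / 2" using dn by (simp add: t_def)
      finally have "dist y x < e" using e by simp
      moreover have "y \<noteq> x" using t dn by (simp add: y_def)
      ultimately have yy: "g k y < 0" "y \<in> \<Gamma>" using eb by auto
      have "?d \<bullet> (y - xb) \<le> 0"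
        using qc_grad[OF A(8)[OF km] A(6)[OF km xbG] yy(2) xbG] yy(1) kA
        unfolding active_set_def by auto
      moreover have "?d \<bullet> (y - xb) = ?d \<bullet> (x - xb) + t * (?d \<bullet> ?d)"
        by (simp add: y_def algebra_simps inner_add_right)
      moreover have "?d \<bullet> ?d > 0" using dn by simp
      ultimately show False using pos t by (smt (verit) mult_pos_pos)
    qed
    from A(10) obtain yy where "\<forall>i\<in>?A. dg i xb \<bullet> yy < 0" unfolding GMFCQ_def by blast
    with kA dz show False by auto
  qed
  have sub: "?S \<subseteq> X1 X m g xb lam"
  proof
    fix x assume xS: "x \<in> ?S"
    thus "x \<in> X1 X m g xb lam" using key[OF xS]
      unfolding X1_def solution_set_def feasible_set_def by auto
  qed
  have "f x + (\<Sum>i\<in>?A. lam i * g i x) = f xb" if xS: "x \<in> ?S" for x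
  proof -
    have "f x = f xb" using xS A(9) unfolding solution_set_def by (auto intro: antisym)
    moreover have "(\<Sum>i\<in>?A. lam i * g i x) = 0"
    proof (rule sum.neutral, rule ballI)
      fix i assume iA: "i \<in> ?A"
      show "lam i * g i x = 0"
      proof (cases "lam i > 0")
        case True
        hence "i \<in> Itilde m g xb lam" using iA unfolding active_set_def Itilde_def by auto
        thus ?thesis using key[OF xS] by simp
      next
        case False
        hence "lam i = 0" using lam0 Asub iA by force
        thus ?thesis by simp
      qed
    qed
    ultimately show ?thesis by simp
  qed
  thus ?thesis using sub by blast
qed

end
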